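(* Let $n\ge2$ and $q_1,q_2\in\mathbb{C}$ with $q_1q_2\ne0$, put $q=-q_2/q_1$, and assume $1+q+\cdots+q^{n-1}\ne0$. Then $\mathbf{E}=\mathbf{L}\oplus\mathbf{F}$, and this is an orthogonal decomposition (with respect to the bilinear form $\langle-,-\rangle$) into $H_n(q_1,q_2)$-submodules, hence also into $\mathbb{C}B_n$-submodules.
   Context: $B_n$ is Artin's braid group with generators $\sigma_1,\dots,\sigma_{n-1}$. The Iwahori--Hecke algebra $H_n(q_1,q_2)$ is generated by $T_1,\dots,T_{n-1}$ subject to the braid relations $T_iT_{i+1}T_i=T_{i+1}T_iT_{i+1}$, $T_iT_j=T_jT_i$ ($|i-j|>1$) and $(T_i-q_1)(T_i-q_2)=0$. Let $\mathbf{E}=\mathbb{C}^n$ with basis $e_1,\dots,e_n$, on which $T_i$ (and $\sigma_i$) act by $e_j\mapsto q_1e_j$ ($j\ne i,i+1$), $e_{i+1}\mapsto-q_2e_i$, $e_i\mapsto(q_1+q_2)e_i+q_1e_{i+1}$ (the generalized Burau representation, which factors through $H_n(q_1,q_2)$). Let $\mathbf{L}=\mathbb{C}(e_1+\cdots+e_n)$ and $\mathbf{F}=\mathrm{span}\{q_2e_i+q_1e_{i+1}:1\le i\le n-1\}$. The symmetric bilinear form on $\mathbf{E}$ is $\langle e_i,e_j\rangle=\delta_{ij}q^{j-1}$. *)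

theory Defs
  imports Complex_Main
begin

text \<open>Vectors of E = C^n are modelled as functions nat => complex, indexed 1..n,
  vanishing outside {1..n}. Basis vector e_j is burau_e j.\<close>

definition burau_E :: "nat \<Rightarrow> (nat \<Rightarrow> complex) set" where
  "burau_E n = {v. \<forall>j. (j < 1 \<or> n < j) \<longrightarrow> v j = 0}"

definition burau_e :: "nat \<Rightarrow> nat \<Rightarrow> complex" where
  "burau_e j = (\<lambda>k. if k = j then 1 else 0)"

text \<open>Action of T_i (and sigma_i): e_j -> q1 e_j (j not i,i+1), e_(i+1) -> -q2 e_i,
  e_i -> (q1+q2) e_i + q1 e_(i+1), extended linearly.\<close>
definition burau_T :: "complex \<Rightarrow> complex \<Rightarrow> nat \<Rightarrow> (nat \<Rightarrow> complex) \<Rightarrow> (nat \<Rightarrow> complex)" where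
  "burau_T q1 q2 i v = (\<lambda>j. if j = i then (q1 + q2) * v i - q2 * v (i + 1)
                          else if j = i + 1 then q1 * v i
                          else q1 * v j)"

definition burau_L :: "nat \<Rightarrow> (nat \<Rightarrow> complex) set" where
  "burau_L n = {v. \<exists>c::complex. v = (\<lambda>j. \<Sum>k\<in>{1..n}. c * burau_e k j)}"

definition burau_F :: "nat \<Rightarrow> complex \<Rightarrow> complex \<Rightarrow> (nat \<Rightarrow> complex) set" where
  "burau_F n q1 q2 = {v. \<exists>c::nat \<Rightarrow> complex.
      v = (\<lambda>j. \<Sum>i\<in>{1..n-1}. c i * (q2 * burau_e i j + q1 * burau_e (i + 1) j))}"

definition burau_form :: "nat \<Rightarrow> complex \<Rightarrow> (nat \<Rightarrow> complex) \<Rightarrow> (nat \<Rightarrow> complex) \<Rightarrow> complex" where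
  "burau_form n q v w = (\<Sum>j\<in>{1..n}. v j * w j * q ^ (j - 1))"

end

theory Submission imports Defs begin

lemma mult_ite1: "(c::complex) * (if P then 1 else 0) = (if P then c else 0)" by simp

definition Lv :: "nat \<Rightarrow> complex \<Rightarrow> nat \<Rightarrow> complex" where
  "Lv n c = (\<lambda>j. if 1 \<le> j \<and> j \<le> n then c else 0)"

definition Fv :: "nat \<Rightarrow> complex \<Rightarrow> complex \<Rightarrow> (nat \<Rightarrow> complex) \<Rightarrow> nat \<Rightarrow> complex" where
  "Fv n q1 q2 c = (\<lambda>j. (if 1 \<le> j \<and> j < n then q2 * c j else 0)
      + (if 2 \<le> j \<and> j \<le> n then q1 * c (j - 1) else 0))"

lemma L_char: "burau_L n = range (Lv n)"
proof -
  have "(\<lambda>j. \<Sum>k\<in>{1..n}. c * burau_e k j) = Lv n c" for c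
    by (rule ext) (simp add: burau_e_def Lv_def mult_ite1 sum.delta')
  then show ?thesis unfolding burau_L_def by auto
qed

lemma F_char: "burau_F n q1 q2 = range (Fv n q1 q2)"
proof -
  have e: "(\<lambda>j. \<Sum>i\<in>{1..n-1}. c i * (q2 * burau_e i j + q1 * burau_e (i + 1) j)) = Fv n q1 q2 c" for c
  proof (rule ext)
    fix j
    have "(\<Sum>i\<in>{1..n-1}. c i * (q2 * burau_e i j + q1 * burau_e (i + 1) j))
      = q2 * (\<Sum>i\<in>{1..n-1}. if i = j then c i else 0) + q1 * (\<Sum>i\<in>{1..n-1}. if i = j - 1 \<and> j \<ge> 1 then c i else 0)"
    proof -
      have "(\<Sum>i\<in>{1..n-1}. c i * (q2 * burau_e i j + q1 * burau_e (i + 1) j))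
        = (\<Sum>i\<in>{1..n-1}. q2 * (if i = j then c i else 0) + q1 * (if i = j - 1 \<and> j \<ge> 1 then c i else 0))"
        by (rule sum.cong) (auto simp: burau_e_def algebra_simps)
      then show ?thesis by (simp add: sum.distrib sum_distrib_left[symmetric])
    qed
    also have "\<dots> = Fv n q1 q2 c j"
      by (cases "j \<ge> 1"; simp add: Fv_def sum.delta; auto)
    finally show "(\<Sum>i\<in>{1..n-1}. c i * (q2 * burau_e i j + q1 * burau_e (i + 1) j)) = Fv n q1 q2 c j" .
  qed
  show ?thesis unfolding burau_F_def using e by auto
qed

lemma Lv_E: "Lv n c \<in> burau_E n" by (simp add: Lv_def burau_E_def)
lemma Fv_E: "Fv n q1 q2 c \<in> burau_E n" by (simp add: Fv_def burau_E_def)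

lemma T_Lv: "1 \<le> i \<Longrightarrow> i < n \<Longrightarrow> burau_T q1 q2 i (Lv n c) = Lv n (q1 * c)"
  by (rule ext) (auto simp: burau_T_def Lv_def algebra_simps)

definition cT :: "nat \<Rightarrow> complex \<Rightarrow> complex \<Rightarrow> nat \<Rightarrow> (nat \<Rightarrow> complex) \<Rightarrow> nat \<Rightarrow> complex" where
  "cT n q1 q2 i c = (\<lambda>k. if k = i then q2 * c i + (if i \<ge> 2 then q1 * c (i - 1) else 0)
     - (if i + 1 < n then q2 * c (i + 1) else 0) else q1 * c k)"

lemma T_Fv: "1 \<le> i \<Longrightarrow> i < n \<Longrightarrow> burau_T q1 q2 i (Fv n q1 q2 c) = Fv n q1 q2 (cT n q1 q2 i c)"
  by (rule ext) (auto simp: burau_T_def Fv_def cT_def algebra_simps)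

lemma Fv_lin: "(\<lambda>j. a * Fv n q1 q2 c j + b * Fv n q1 q2 d j) = Fv n q1 q2 (\<lambda>k. a * c k + b * d k)"
  by (rule ext) (auto simp: Fv_def algebra_simps)

lemma T_quad: "burau_T q1 q2 i (burau_T q1 q2 i v) = (\<lambda>j. (q1 + q2) * burau_T q1 q2 i v j - q1 * q2 * v j)"
  by (rule ext) (auto simp: burau_T_def algebra_simps)

lemma T_inv: assumes "q1 * q2 \<noteq> 0"
  shows "burau_T q1 q2 i (\<lambda>j. ((q1 + q2) / (q1 * q2)) * v j + (- 1 / (q1 * q2)) * burau_T q1 q2 i v j) = v"
proof -
  have lin: "burau_T q1 q2 i (\<lambda>j. a * x j + b * y j) = (\<lambda>j. a * burau_T q1 q2 i x j + b * burau_T q1 q2 i y j)" for a b x y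
    by (rule ext) (auto simp: burau_T_def algebra_simps)
  show ?thesis using assms
    unfolding lin[of "(q1 + q2) / (q1 * q2)" v "- 1 / (q1 * q2)" "burau_T q1 q2 i v"] T_quad
    by (intro ext) (simp add: field_simps)
qed

lemma Fexpr: "(\<lambda>j. \<Sum>i\<in>{1..n-1}. c i * (q2 * burau_e i j + q1 * burau_e (i + 1) j)) \<in> burau_F n q1 q2"
  unfolding burau_F_def by blast

lemma orth_gen:
  assumes "q2 = - (q1 * q)"
  shows "burau_form n q (Lv n c) (\<lambda>j. \<Sum>i\<in>{1..n-1}. d i * (q2 * burau_e i j + q1 * burau_e (i + 1) j)) = 0"
proof -
  have inner: "(\<Sum>j\<in>{1..n}. Lv n c j * (q2 * burau_e i j + q1 * burau_e (i + 1) j) * q ^ (j - 1)) = 0"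
    if i: "i \<in> {1..n-1}" for i
  proof -
    have "(\<Sum>j\<in>{1..n}. Lv n c j * (q2 * burau_e i j + q1 * burau_e (i + 1) j) * q ^ (j - 1))
       = (\<Sum>j\<in>{1..n}. (if j = i then c * q2 * q ^ (i - 1) else 0) + (if j = i + 1 then c * q1 * q ^ i else 0))"
      using i by (intro sum.cong) (auto simp: Lv_def burau_e_def)
    also have "\<dots> = c * q2 * q ^ (i - 1) + c * q1 * q ^ i"
    proof -
      have "i \<le> n" "i + 1 \<le> n" "1 \<le> i" using i by auto
      then show ?thesis by (simp add: sum.distrib sum.delta)
    qed
    also have "\<dots> = 0"
    proof -
      have "q ^ i = q * q ^ (i - 1)" using i by (cases i) auto
      then show ?thesis using assms by (simp add: algebra_simps)
    qed
    finally show ?thesis .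
  qed
  have "burau_form n q (Lv n c) (\<lambda>j. \<Sum>i\<in>{1..n-1}. d i * (q2 * burau_e i j + q1 * burau_e (i + 1) j))
     = (\<Sum>j\<in>{1..n}. \<Sum>i\<in>{1..n-1}. d i * (Lv n c j * (q2 * burau_e i j + q1 * burau_e (i + 1) j) * q ^ (j - 1)))"
    unfolding burau_form_def by (intro sum.cong refl) (simp add: sum_distrib_left sum_distrib_right algebra_simps)
  also have "\<dots> = (\<Sum>i\<in>{1..n-1}. d i * (\<Sum>j\<in>{1..n}. Lv n c j * (q2 * burau_e i j + q1 * burau_e (i + 1) j) * q ^ (j - 1)))"
    by (subst sum.swap) (simp add: sum_distrib_left)
  also have "\<dots> = 0" using inner by simp
  finally show ?thesis .
qed

lemma geom_reindex: "(\<Sum>j\<in>{1..n}. (q::complex) ^ (j - 1)) = (\<Sum>k<n. q ^ k)"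
  by (induction n) auto

lemma form_LL: "burau_form n q (Lv n c) (Lv n c) = c * c * (\<Sum>k<n. q ^ k)"
proof -
  have "burau_form n q (Lv n c) (Lv n c) = (\<Sum>j\<in>{1..n}. c * c * q ^ (j - 1))"
    unfolding burau_form_def by (intro sum.cong) (auto simp: Lv_def)
  then show ?thesis using geom_reindex[of q n] by (simp add: sum_distrib_left[symmetric])
qed

lemma decomp:
  assumes n: "n \<ge> 2" and q1: "q1 \<noteq> 0" and q: "q \<noteq> 0" and q2: "q2 = - (q1 * q)"
    and S: "(\<Sum>k<n. q ^ k) \<noteq> 0" and v: "v \<in> burau_E n"
  shows "\<exists>a c. v = (\<lambda>j. Lv n a j + Fv n q1 q2 c j)"
proof -
  define S where "S = (\<Sum>k<n. q ^ k)"
  define a where "a = (\<Sum>j\<in>{1..n}. v j * q ^ (j - 1)) / S"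
  define w where "w = (\<lambda>j. v j - Lv n a j)"
  define P where "P m = (\<Sum>k\<in>{1..m}. w k * q ^ (k - 1))" for m
  define c where "c m = - P m / (q1 * q ^ m)" for m
  have P0: "P 0 = 0" by (simp add: P_def)
  have PS: "P (Suc m) = P m + w (Suc m) * q ^ m" for m by (simp add: P_def)
  have Pn: "P n = 0"
  proof -
    have "P n = (\<Sum>k\<in>{1..n}. v k * q ^ (k - 1)) - a * (\<Sum>k\<in>{1..n}. q ^ (k - 1))"
      unfolding P_def w_def by (simp add: Lv_def algebra_simps sum_subtractf sum_distrib_left)
    also have "\<dots> = 0" using S unfolding a_def geom_reindex S_def by simp
    finally show ?thesis .
  qed
  have wout: "w j = 0" if "j < 1 \<or> n < j" for j
    using v that by (auto simp: w_def Lv_def burau_E_def)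
  have "w = Fv n q1 q2 c"
  proof (rule ext)
    fix j
    consider "j < 1 \<or> n < j" | "j = 1" | m where "j = Suc m" "1 \<le> m" "Suc m < n" | "j = n"
      using n by (cases j) force+
    then show "w j = Fv n q1 q2 c j"
    proof cases
      case 1 then show ?thesis using wout by (auto simp: Fv_def)
    next
      case 2 then show ?thesis using n q q1 by (simp add: Fv_def c_def q2 P_def)
    next
      case 3
      have "Fv n q1 q2 c j = q2 * c (Suc m) + q1 * c m" using 3 by (simp add: Fv_def)
      also have "\<dots> = P (Suc m) / q ^ m - P m / q ^ m"
        using q q1 by (simp add: c_def q2 field_simps)
      also have "\<dots> = w j" using q 3 by (simp add: PS field_simps)
      finally show ?thesis by simp
    next
      case 4
      obtain m where m: "n = Suc m" "1 \<le> m" using n by (cases n) auto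
      have "Fv n q1 q2 c j = q1 * c m" using 4 m by (simp add: Fv_def)
      also have "\<dots> = - P m / q ^ m" using q q1 by (simp add: c_def field_simps)
      also have "\<dots> = w j" using q 4 Pn m PS[of m] by (simp add: field_simps) (metis add.commute add_eq_0_iff)
      finally show ?thesis by simp
    qed
  qed
  then have "v = (\<lambda>j. Lv n a j + Fv n q1 q2 c j)" by (auto simp: w_def fun_eq_iff algebra_simps)
  then show ?thesis by blast
qed

theorem corollary3p6:
  fixes n :: nat and q1 q2 :: complex
  assumes "n \<ge> 2" and "q1 * q2 \<noteq> 0"
    and "(\<Sum>k<n. (- q2 / q1) ^ k) \<noteq> 0"
  shows "burau_L n \<subseteq> burau_E n \<and> burau_F n q1 q2 \<subseteq> burau_E n
    \<and> burau_L n \<inter> burau_F n q1 q2 = {(\<lambda>_. 0)}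
    \<and> (\<forall>v\<in>burau_E n. \<exists>l\<in>burau_L n. \<exists>f\<in>burau_F n q1 q2. v = (\<lambda>j. l j + f j))
    \<and> (\<forall>l\<in>burau_L n. \<forall>f\<in>burau_F n q1 q2. burau_form n (- q2 / q1) l f = 0)
    \<and> (\<forall>i. 1 \<le> i \<and> i < n \<longrightarrow>
          burau_T q1 q2 i ` burau_L n = burau_L n
        \<and> burau_T q1 q2 i ` burau_F n q1 q2 = burau_F n q1 q2)"
proof -
  define q where "q = - q2 / q1"
  have q1: "q1 \<noteq> 0" and q2n: "q2 \<noteq> 0" using assms(2) by auto
  have q: "q \<noteq> 0" using q1 q2n by (simp add: q_def)
  have q2: "q2 = - (q1 * q)" using q1 by (simp add: q_def)
  have S: "(\<Sum>k<n. q ^ k) \<noteq> 0" using assms(3) by (simp add: q_def)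
  have c1: "burau_L n \<subseteq> burau_E n" using Lv_E by (auto simp: L_char)
  have c2: "burau_F n q1 q2 \<subseteq> burau_E n" using Fv_E by (auto simp: F_char)
  have orth: "\<forall>l\<in>burau_L n. \<forall>f\<in>burau_F n q1 q2. burau_form n q l f = 0"
    using orth_gen[OF q2] by (auto simp: L_char burau_F_def)
  have c3: "burau_L n \<inter> burau_F n q1 q2 = {(\<lambda>_. 0)}"
  proof
    have "(\<lambda>_. 0) = Lv n 0" by (simp add: Lv_def fun_eq_iff)
    moreover have "(\<lambda>_. 0) = Fv n q1 q2 (\<lambda>_. 0)" by (simp add: Fv_def fun_eq_iff)
    ultimately show "{(\<lambda>_. 0)} \<subseteq> burau_L n \<inter> burau_F n q1 q2"
      by (auto simp: L_char F_char)
  next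
    show "burau_L n \<inter> burau_F n q1 q2 \<subseteq> {(\<lambda>_. 0)}"
    proof
      fix x assume x: "x \<in> burau_L n \<inter> burau_F n q1 q2"
      then obtain c where xc: "x = Lv n c" by (auto simp: L_char)
      have "burau_form n q x x = 0" using orth x by blast
      then have "c * c * (\<Sum>k<n. q ^ k) = 0" using form_LL xc by simp
      then have "c = 0" using S by simp
      then show "x \<in> {(\<lambda>_. 0)}" using xc by (simp add: Lv_def fun_eq_iff)
    qed
  qed
  have c4: "\<forall>v\<in>burau_E n. \<exists>l\<in>burau_L n. \<exists>f\<in>burau_F n q1 q2. v = (\<lambda>j. l j + f j)"
  proof
    fix v assume "v \<in> burau_E n"
    then obtain a c where "v = (\<lambda>j. Lv n a j + Fv n q1 q2 c j)"
      using decomp[OF assms(1) q1 q q2 S] by blast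
    then show "\<exists>l\<in>burau_L n. \<exists>f\<in>burau_F n q1 q2. v = (\<lambda>j. l j + f j)"
      by (auto simp: L_char F_char)
  qed
  have c6: "burau_T q1 q2 i ` burau_L n = burau_L n \<and> burau_T q1 q2 i ` burau_F n q1 q2 = burau_F n q1 q2"
    if i: "1 \<le> i" "i < n" for i
  proof
    show "burau_T q1 q2 i ` burau_L n = burau_L n"
    proof
      show "burau_T q1 q2 i ` burau_L n \<subseteq> burau_L n" using T_Lv[OF i] by (auto simp: L_char)
      show "burau_L n \<subseteq> burau_T q1 q2 i ` burau_L n"
      proof
        fix x assume "x \<in> burau_L n"
        then obtain c where "x = Lv n c" by (auto simp: L_char)
        then have "x = burau_T q1 q2 i (Lv n (c / q1))" using T_Lv[OF i] q1 by simp
        then show "x \<in> burau_T q1 q2 i ` burau_L n" by (auto simp: L_char)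
      qed
    qed
    show "burau_T q1 q2 i ` burau_F n q1 q2 = burau_F n q1 q2"
    proof
      show "burau_T q1 q2 i ` burau_F n q1 q2 \<subseteq> burau_F n q1 q2" using T_Fv[OF i] by (auto simp: F_char)
      show "burau_F n q1 q2 \<subseteq> burau_T q1 q2 i ` burau_F n q1 q2"
      proof
        fix x assume "x \<in> burau_F n q1 q2"
        then obtain c where xc: "x = Fv n q1 q2 c" by (auto simp: F_char)
        define y where "y = (\<lambda>j. ((q1 + q2) / (q1 * q2)) * x j + (- 1 / (q1 * q2)) * burau_T q1 q2 i x j)"
        have "y = Fv n q1 q2 (\<lambda>k. ((q1 + q2) / (q1 * q2)) * c k + (- 1 / (q1 * q2)) * cT n q1 q2 i c k)"
          unfolding y_def xc T_Fv[OF i] Fv_lin ..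
        then have "y \<in> burau_F n q1 q2" by (auto simp: F_char)
        moreover have "x = burau_T q1 q2 i y" unfolding y_def using T_inv[OF assms(2)] by simp
        ultimately show "x \<in> burau_T q1 q2 i ` burau_F n q1 q2" by blast
      qed
    qed
  qed
  have orth': "\<forall>l\<in>burau_L n. \<forall>f\<in>burau_F n q1 q2. burau_form n (- q2 / q1) l f = 0"
    using orth unfolding q_def .
  have c6': "\<forall>i. 1 \<le> i \<and> i < n \<longrightarrow>
          burau_T q1 q2 i ` burau_L n = burau_L n
        \<and> burau_T q1 q2 i ` burau_F n q1 q2 = burau_F n q1 q2"
    using c6 by blast
  show ?thesis by (intro conjI c1 c2 c3 c4 orth' c6')
qed

end
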